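(* For all $\lambda$-terms $M,N$: $M\simeq_{\beta_v}N$ iff $M^v\simeq_b N^v$.
   Context: Bang calculus. The set $!\Lambda$ of terms is $T,S ::= x \mid \lambda x.T \mid T\,S \mid \mathrm{der}\,T \mid\ !T$; $\lambda$ the only binder, up to $\alpha$-conversion, $T\{S/x\}$ capture-avoiding substitution. Contexts: $C ::= [\cdot] \mid \lambda x.C \mid C\,T \mid T\,C \mid \mathrm{der}\,C \mid\ !C$. Root steps $(\lambda x.T)(!S)\mapsto_v T\{S/x\}$, $\mathrm{der}(!T)\mapsto_d T$; $\to_b$ is the closure of $\mapsto_v\cup\mapsto_d$ under contexts. $\lambda$-calculus: $M ::= V\mid MN$, values $V ::= x\mid\lambda x.M$; $\to_{\beta_v}$ is the closure of $(\lambda x.M)V\mapsto_{\beta_v}M\{V/x\}$ ($V$ a value) under $\lambda$-contexts $C ::= [\cdot]\mid\lambda x.C\mid C\,M\mid M\,C$. CbV translation: $x^v=\,!x$, $(\lambda x.M)^v=\,!(\lambda x.M^v)$, $(MN)^v=(\mathrm{der}\,M^v)\,N^v$. For a relation $\to_r$, $\simeq_r$ denotes its reflexive-symmetric-transitive closure. *)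

theory Defs
  imports Main
begin

text \<open>Terms up to alpha-conversion are represented with de Bruijn indices.\<close>

datatype lterm = LVar nat | LAbs lterm | LApp lterm lterm

datatype bterm = BVar nat | BAbs bterm | BApp bterm bterm | Der bterm | Bang bterm

primrec llift :: "lterm \<Rightarrow> nat \<Rightarrow> lterm" where
  "llift (LVar i) k = (if i < k then LVar i else LVar (Suc i))"
| "llift (LAbs s) k = LAbs (llift s (Suc k))"
| "llift (LApp s t) k = LApp (llift s k) (llift t k)"

primrec lsubst :: "lterm \<Rightarrow> lterm \<Rightarrow> nat \<Rightarrow> lterm" where
  "lsubst (LVar i) s k =
     (if k < i then LVar (i - 1) else if i = k then s else LVar i)"
| "lsubst (LAbs t) s k = LAbs (lsubst t (llift s 0) (Suc k))"
| "lsubst (LApp t u) s k = LApp (lsubst t s k) (lsubst u s k)"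

primrec blift :: "bterm \<Rightarrow> nat \<Rightarrow> bterm" where
  "blift (BVar i) k = (if i < k then BVar i else BVar (Suc i))"
| "blift (BAbs s) k = BAbs (blift s (Suc k))"
| "blift (BApp s t) k = BApp (blift s k) (blift t k)"
| "blift (Der s) k = Der (blift s k)"
| "blift (Bang s) k = Bang (blift s k)"

primrec bsubst :: "bterm \<Rightarrow> bterm \<Rightarrow> nat \<Rightarrow> bterm" where
  "bsubst (BVar i) s k =
     (if k < i then BVar (i - 1) else if i = k then s else BVar i)"
| "bsubst (BAbs t) s k = BAbs (bsubst t (blift s 0) (Suc k))"
| "bsubst (BApp t u) s k = BApp (bsubst t s k) (bsubst u s k)"
| "bsubst (Der t) s k = Der (bsubst t s k)"
| "bsubst (Bang t) s k = Bang (bsubst t s k)"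

primrec is_value :: "lterm \<Rightarrow> bool" where
  "is_value (LVar _) = True"
| "is_value (LAbs _) = True"
| "is_value (LApp _ _) = False"

inductive beta_v :: "lterm \<Rightarrow> lterm \<Rightarrow> bool" where
  root: "is_value V \<Longrightarrow> beta_v (LApp (LAbs M) V) (lsubst M V 0)"
| abs: "beta_v M M' \<Longrightarrow> beta_v (LAbs M) (LAbs M')"
| appL: "beta_v M M' \<Longrightarrow> beta_v (LApp M N) (LApp M' N)"
| appR: "beta_v N N' \<Longrightarrow> beta_v (LApp M N) (LApp M N')"

inductive bstep :: "bterm \<Rightarrow> bterm \<Rightarrow> bool" where
  root_v: "bstep (BApp (BAbs T) (Bang S)) (bsubst T S 0)"
| root_d: "bstep (Der (Bang T)) T"
| abs: "bstep T T' \<Longrightarrow> bstep (BAbs T) (BAbs T')"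
| appL: "bstep T T' \<Longrightarrow> bstep (BApp T S) (BApp T' S)"
| appR: "bstep S S' \<Longrightarrow> bstep (BApp T S) (BApp T S')"
| der: "bstep T T' \<Longrightarrow> bstep (Der T) (Der T')"
| bang: "bstep T T' \<Longrightarrow> bstep (Bang T) (Bang T')"

primrec cbv :: "lterm \<Rightarrow> bterm" where
  "cbv (LVar i) = Bang (BVar i)"
| "cbv (LAbs M) = Bang (BAbs (cbv M))"
| "cbv (LApp M N) = BApp (Der (cbv M)) (cbv N)"

end

theory Submission imports Defs begin

declare bsubst.simps(1)[simp del]

lemma bsubst_eq [simp]: "bsubst (BVar k) u k = u"
  by (simp add: bsubst.simps)
lemma bsubst_gt [simp]: "i < j \<Longrightarrow> bsubst (BVar j) u i = BVar (j - 1)"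
  by (simp add: bsubst.simps)
lemma bsubst_lt [simp]: "j < i \<Longrightarrow> bsubst (BVar j) u i = BVar j"
  by (simp add: bsubst.simps)

lemma blift_blift:
    "i < k + 1 \<Longrightarrow> blift (blift t i) (Suc k) = blift (blift t k) i"
  by (induct t arbitrary: i k) auto

lemma blift_bsubst [simp]:
    "j < i + 1 \<Longrightarrow> blift (bsubst t s j) i = bsubst (blift t (i + 1)) (blift s i) j"
  by (induct t arbitrary: i j s)
    (simp_all add: diff_Suc bsubst.simps blift_blift split: nat.split)

lemma blift_bsubst_lt:
    "i < j + 1 \<Longrightarrow> blift (bsubst t s j) i = bsubst (blift t i) (blift s i) (j + 1)"
  by (induct t arbitrary: i j s) (auto simp add: bsubst.simps blift_blift)

lemma bsubst_blift [simp]: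
    "bsubst (blift t k) s k = t"
  by (induct t arbitrary: k s) simp_all

lemma bsubst_bsubst:
    "i < j + 1 \<Longrightarrow> bsubst (bsubst t (blift v i) (Suc j)) (bsubst u v j) i = bsubst (bsubst t u i) v j"
  by (induct t arbitrary: i j u v)
    (simp_all add: diff_Suc bsubst.simps blift_blift [symmetric] blift_bsubst_lt
      split: nat.split)

inductive pb :: "bterm \<Rightarrow> bterm \<Rightarrow> bool" where
  var [simp, intro!]: "pb (BVar n) (BVar n)"
| abs [simp, intro!]: "pb s t \<Longrightarrow> pb (BAbs s) (BAbs t)"
| app [simp, intro!]: "pb s s' \<Longrightarrow> pb t t' \<Longrightarrow> pb (BApp s t) (BApp s' t')"
| der [simp, intro!]: "pb s t \<Longrightarrow> pb (Der s) (Der t)"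
| bang [simp, intro!]: "pb s t \<Longrightarrow> pb (Bang s) (Bang t)"
| beta [simp, intro!]: "pb s s' \<Longrightarrow> pb t t' \<Longrightarrow> pb (BApp (BAbs s) (Bang t)) (bsubst s' t' 0)"
| derb [simp, intro!]: "pb s t \<Longrightarrow> pb (Der (Bang s)) t"

inductive_cases pb_cases:
  "pb (BVar n) t"
  "pb (BAbs s) t"
  "pb (BApp s t) u"
  "pb (Der s) t"
  "pb (Bang s) t"

lemma pb_refl [simp]: "pb t t"
  by (induct t) simp_all

lemma bstep_pb: "bstep s t \<Longrightarrow> pb s t"
  by (induct rule: bstep.induct) auto

lemma bsteps_BAbs: "bstep\<^sup>*\<^sup>* s s' \<Longrightarrow> bstep\<^sup>*\<^sup>* (BAbs s) (BAbs s')"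
  by (induct rule: rtranclp_induct) (auto intro: rtranclp.rtrancl_into_rtrancl bstep.intros)
lemma bsteps_Der: "bstep\<^sup>*\<^sup>* s s' \<Longrightarrow> bstep\<^sup>*\<^sup>* (Der s) (Der s')"
  by (induct rule: rtranclp_induct) (auto intro: rtranclp.rtrancl_into_rtrancl bstep.intros)
lemma bsteps_Bang: "bstep\<^sup>*\<^sup>* s s' \<Longrightarrow> bstep\<^sup>*\<^sup>* (Bang s) (Bang s')"
  by (induct rule: rtranclp_induct) (auto intro: rtranclp.rtrancl_into_rtrancl bstep.intros)
lemma bsteps_AppL: "bstep\<^sup>*\<^sup>* s s' \<Longrightarrow> bstep\<^sup>*\<^sup>* (BApp s t) (BApp s' t)"
  by (induct rule: rtranclp_induct) (auto intro: rtranclp.rtrancl_into_rtrancl bstep.intros)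
lemma bsteps_AppR: "bstep\<^sup>*\<^sup>* t t' \<Longrightarrow> bstep\<^sup>*\<^sup>* (BApp s t) (BApp s t')"
  by (induct rule: rtranclp_induct) (auto intro: rtranclp.rtrancl_into_rtrancl bstep.intros)
lemma bsteps_App: "bstep\<^sup>*\<^sup>* s s' \<Longrightarrow> bstep\<^sup>*\<^sup>* t t' \<Longrightarrow> bstep\<^sup>*\<^sup>* (BApp s t) (BApp s' t')"
  by (meson bsteps_AppL bsteps_AppR rtranclp_trans)

lemma pb_bsteps: "pb s t \<Longrightarrow> bstep\<^sup>*\<^sup>* s t"
proof (induct rule: pb.induct)
  case (beta s s' t t')
  have "bstep\<^sup>*\<^sup>* (BApp (BAbs s) (Bang t)) (BApp (BAbs s') (Bang t'))"
    by (simp add: beta bsteps_App bsteps_BAbs bsteps_Bang)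
  then show ?case by (meson bstep.root_v rtranclp.rtrancl_into_rtrancl)
next
  case (derb s t)
  have "bstep\<^sup>*\<^sup>* (Der (Bang s)) (Der (Bang t))"
    by (simp add: derb bsteps_Der bsteps_Bang)
  then show ?case by (meson bstep.root_d rtranclp.rtrancl_into_rtrancl)
qed (auto intro: bsteps_App bsteps_BAbs bsteps_Der bsteps_Bang)


lemma pb_lift [simp]: "pb t t' \<Longrightarrow> pb (blift t n) (blift t' n)"
proof (induct arbitrary: n rule: pb.induct)
  case (beta s s' t t')
  then show ?case using pb.beta[OF beta(2)[of "Suc n"] beta(4)[of n]] by simp
qed auto

lemma pb_subst: "pb t t' \<Longrightarrow> pb s s' \<Longrightarrow> pb (bsubst t s n) (bsubst t' s' n)"
proof (induct arbitrary: s s' n rule: pb.induct)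
  case (var m)
  then show ?case by (simp add: bsubst.simps)
next
  case (beta t t' u u')
  have "pb (bsubst (BApp (BAbs t) (Bang u)) s n)
          (bsubst (bsubst t' (blift s' 0) (Suc n)) (bsubst u' s' n) 0)"
    using beta by simp
  then show ?case by (simp add: bsubst_bsubst)
qed auto

fun cd :: "bterm \<Rightarrow> bterm" where
  "cd (BVar n) = BVar n"
| "cd (BApp (BAbs u) (Bang t)) = bsubst (cd u) (cd t) 0"
| "cd (BApp s t) = BApp (cd s) (cd t)"
| "cd (Der (Bang t)) = cd t"
| "cd (Der t) = Der (cd t)"
| "cd (BAbs s) = BAbs (cd s)"
| "cd (Bang s) = Bang (cd s)"

declare pb_cases[elim!]

lemma cd_app: "\<not> (\<exists>u v. s = BAbs u \<and> t = Bang v) \<Longrightarrow> cd (BApp s t) = BApp (cd s) (cd t)"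
  by (cases s; cases t) auto

lemma cd_der: "\<not> (\<exists>v. t = Bang v) \<Longrightarrow> cd (Der t) = Der (cd t)"
  by (cases t) auto

lemma pb_cd: "pb s t \<Longrightarrow> pb t (cd s)"
proof (induct rule: pb.induct)
  case (app s s' t t')
  show ?case
  proof (cases "\<exists>u v. s = BAbs u \<and> t = Bang v")
    case True
    then obtain u v where uv: "s = BAbs u" "t = Bang v" by blast
    from app(1) uv obtain u' where u': "s' = BAbs u'" by blast
    from app(3) uv obtain v' where v': "t' = Bang v'" by blast
    from app(2) uv u' have "pb u' (cd u)" by auto
    moreover from app(4) uv v' have "pb v' (cd v)" by auto
    ultimately show ?thesis using uv u' v' by simp
  next
    case False
    then show ?thesis using app by (simp add: cd_app)
  qed
next
  case (der s t)
  show ?case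
  proof (cases "\<exists>v. s = Bang v")
    case True
    then obtain v where v: "s = Bang v" by blast
    from der(1) v obtain v' where v': "t = Bang v'" by blast
    from der(2) v v' have "pb v' (cd v)" by auto
    then show ?thesis using v v' by simp
  next
    case False
    then show ?thesis using der by (simp add: cd_der)
  qed
next
  case (beta s s' t t')
  then show ?case by (simp add: pb_subst)
qed (simp_all)

declare pb_cases[rule del] pb.intros[rule del]

lemma pb_diamond: "pb a b \<Longrightarrow> pb a c \<Longrightarrow> \<exists>d. pb b d \<and> pb c d"
  using pb_cd[of a b] pb_cd[of a c] by blast

lemma pb_strip: "pb\<^sup>*\<^sup>* a b \<Longrightarrow> pb a c \<Longrightarrow> \<exists>d. pb b d \<and> pb\<^sup>*\<^sup>* c d"
proof (induct arbitrary: c rule: rtranclp_induct)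
  case base
  show ?case
    apply (rule exI[of _ c])
    using base by simp
next
  case (step y z)
  from step(3)[OF step(4)] obtain d where d: "pb y d" "pb\<^sup>*\<^sup>* c d" by (elim exE conjE)
  obtain e where e: "pb z e" "pb d e" using pb_diamond[OF step(2) d(1)] by (elim exE conjE)
  show ?case
    apply (rule exI[of _ e])
    using e d rtranclp.rtrancl_into_rtrancl[OF d(2) e(2)] by simp
qed

lemma pb_confl: "pb\<^sup>*\<^sup>* a b \<Longrightarrow> pb\<^sup>*\<^sup>* a c \<Longrightarrow> \<exists>d. pb\<^sup>*\<^sup>* b d \<and> pb\<^sup>*\<^sup>* c d"
proof (induct rule: rtranclp_induct)
  case base
  show ?case
    apply (rule exI[of _ c])
    using base by simp
next
  case (step y z)
  from step(3)[OF step(4)] obtain d where d: "pb\<^sup>*\<^sup>* y d" "pb\<^sup>*\<^sup>* c d" by (elim exE conjE)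
  obtain e where e: "pb d e" "pb\<^sup>*\<^sup>* z e" using pb_strip[OF d(1) step(2)] by (elim exE conjE)
  show ?case
    apply (rule exI[of _ e])
    using e d rtranclp.rtrancl_into_rtrancl[OF d(2) e(1)] by simp
qed

lemma pbs_eq: "pb\<^sup>*\<^sup>* = bstep\<^sup>*\<^sup>*"
proof (intro ext iffI)
  fix a b assume "pb\<^sup>*\<^sup>* a b" then show "bstep\<^sup>*\<^sup>* a b"
  proof (induct rule: rtranclp_induct)
    case (step y z) then show ?case using pb_bsteps[OF step(2)] by (meson rtranclp_trans)
  qed simp
next
  fix a b assume "bstep\<^sup>*\<^sup>* a b" then show "pb\<^sup>*\<^sup>* a b"
  proof (induct rule: rtranclp_induct)
    case (step y z) then show ?case using bstep_pb[OF step(2)] by (meson rtranclp.rtrancl_into_rtrancl)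
  qed simp
qed

lemma bstep_CR: "equivclp bstep a b \<Longrightarrow> \<exists>c. bstep\<^sup>*\<^sup>* a c \<and> bstep\<^sup>*\<^sup>* b c"
proof (induct rule: equivclp_induct)
  case base
  show ?case by (rule exI[of _ a]) simp
next
  case (step y z)
  from step(3) obtain c where c: "bstep\<^sup>*\<^sup>* a c" "bstep\<^sup>*\<^sup>* y c" by (elim exE conjE)
  from step(2) show ?case
  proof
    assume "bstep y z"
    then have "pb\<^sup>*\<^sup>* y z" unfolding pbs_eq by simp
    moreover have "pb\<^sup>*\<^sup>* y c" using c(2) unfolding pbs_eq by simp
    ultimately obtain d where d: "pb\<^sup>*\<^sup>* c d" "pb\<^sup>*\<^sup>* z d"
      using pb_confl by (metis)
    show ?thesis
      apply (rule exI[of _ d])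
      using d c unfolding pbs_eq by (meson rtranclp_trans)
  next
    assume "bstep z y"
    then show ?thesis using c by (meson converse_rtranclp_into_rtranclp)
  qed
qed

primrec dec :: "bterm \<Rightarrow> lterm" where
  "dec (BVar i) = LVar i"
| "dec (BAbs t) = LAbs (dec t)"
| "dec (BApp t s) = LApp (dec t) (dec s)"
| "dec (Der t) = dec t"
| "dec (Bang t) = dec t"

primrec vl :: "bterm \<Rightarrow> bool" where
  "vl (BVar _) = True"
| "vl (BAbs _) = True"
| "vl (BApp _ _) = False"
| "vl (Der _) = False"
| "vl (Bang _) = False"

primrec good :: "bterm \<Rightarrow> bool" where
  "good (BVar _) = True"
| "good (BAbs t) = good t"
| "good (BApp t s) = (good t \<and> good s)"
| "good (Der t) = good t"
| "good (Bang t) = (vl t \<and> good t)"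

lemma dec_cbv [simp]: "dec (cbv M) = M"
  by (induct M) simp_all

lemma dec_lift [simp]: "dec (blift t k) = llift (dec t) k"
  by (induct t arbitrary: k) simp_all

lemma dec_subst: "dec (bsubst t s k) = lsubst (dec t) (dec s) k"
  by (induct t arbitrary: s k) (simp_all add: bsubst.simps)

lemma vl_lift [simp]: "vl (blift t k) = vl t"
  by (cases t) simp_all

lemma good_lift [simp]: "good (blift t k) = good t"
  by (induct t arbitrary: k) simp_all

lemma vl_subst: "vl t \<Longrightarrow> vl s \<Longrightarrow> vl (bsubst t s k)"
  by (cases t) (simp_all add: bsubst.simps)

lemma good_subst: "good t \<Longrightarrow> good s \<Longrightarrow> vl s \<Longrightarrow> good (bsubst t s k)"
  by (induct t arbitrary: s k) (simp_all add: bsubst.simps vl_subst)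

lemma vl_step: "bstep t t' \<Longrightarrow> vl t \<Longrightarrow> vl t'"
  by (induct rule: bstep.induct) simp_all

lemma good_step: "bstep t t' \<Longrightarrow> good t \<Longrightarrow> good t'"
  by (induct rule: bstep.induct) (auto simp: good_subst vl_step)

lemma good_steps: "bstep\<^sup>*\<^sup>* t t' \<Longrightarrow> good t \<Longrightarrow> good t'"
  by (induct rule: rtranclp_induct) (auto simp: good_step)

lemma vl_value: "vl t \<Longrightarrow> is_value (dec t)"
  by (cases t) simp_all

lemma bvs_LAbs: "beta_v\<^sup>*\<^sup>* s s' \<Longrightarrow> beta_v\<^sup>*\<^sup>* (LAbs s) (LAbs s')"
  by (induct rule: rtranclp_induct) (auto intro: rtranclp.rtrancl_into_rtrancl beta_v.intros)
lemma bvs_AppL: "beta_v\<^sup>*\<^sup>* s s' \<Longrightarrow> beta_v\<^sup>*\<^sup>* (LApp s t) (LApp s' t)"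
  by (induct rule: rtranclp_induct) (auto intro: rtranclp.rtrancl_into_rtrancl beta_v.intros)
lemma bvs_AppR: "beta_v\<^sup>*\<^sup>* t t' \<Longrightarrow> beta_v\<^sup>*\<^sup>* (LApp s t) (LApp s t')"
  by (induct rule: rtranclp_induct) (auto intro: rtranclp.rtrancl_into_rtrancl beta_v.intros)

lemma dec_step: "bstep t t' \<Longrightarrow> good t \<Longrightarrow> beta_v\<^sup>*\<^sup>* (dec t) (dec t')"
proof (induct rule: bstep.induct)
  case (root_v T S)
  then have "is_value (dec S)" by (simp add: vl_value)
  then have "beta_v (LApp (LAbs (dec T)) (dec S)) (lsubst (dec T) (dec S) 0)"
    by (rule beta_v.root)
  then show ?case by (simp add: dec_subst)
qed (auto intro: bvs_LAbs bvs_AppL bvs_AppR)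

lemma dec_steps: "bstep\<^sup>*\<^sup>* t t' \<Longrightarrow> good t \<Longrightarrow> beta_v\<^sup>*\<^sup>* (dec t) (dec t')"
proof (induct rule: rtranclp_induct)
  case (step y z)
  then show ?case using dec_step[OF step(2) good_steps[OF step(1) step(4)]]
    by (meson rtranclp_trans)
qed simp

lemma good_cbv: "good (cbv M)"
  by (induct M) simp_all

primrec uv :: "lterm \<Rightarrow> bterm" where
  "uv (LVar i) = BVar i"
| "uv (LAbs M) = BAbs (cbv M)"
| "uv (LApp M N) = BApp (cbv M) (cbv N)"

lemma cbv_lift [simp]: "cbv (llift M k) = blift (cbv M) k"
  by (induct M arbitrary: k) simp_all

lemma uv_lift [simp]: "uv (llift M k) = blift (uv M) k"
  by (cases M) simp_all

lemma cbv_value: "is_value V \<Longrightarrow> cbv V = Bang (uv V)"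
  by (cases V) simp_all

lemma value_lift: "is_value V \<Longrightarrow> is_value (llift V k)"
  by (cases V) simp_all

lemma cbv_subst: "is_value V \<Longrightarrow> cbv (lsubst M V k) = bsubst (cbv M) (uv V) k"
  by (induct M arbitrary: V k) (auto simp: bsubst.simps cbv_value value_lift)

lemma beta_cbv: "beta_v M N \<Longrightarrow> bstep\<^sup>*\<^sup>* (cbv M) (cbv N)"
proof (induct rule: beta_v.induct)
  case (root V M)
  have 1: "bstep (cbv (LApp (LAbs M) V)) (BApp (BAbs (cbv M)) (Bang (uv V)))"
    using root by (simp add: cbv_value bstep.appL bstep.root_d)
  have 2: "bstep (BApp (BAbs (cbv M)) (Bang (uv V))) (cbv (lsubst M V 0))"
    using root by (simp add: cbv_subst bstep.root_v)
  show ?case using 1 2 by (meson rtranclp.rtrancl_into_rtrancl r_into_rtranclp)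
qed (auto intro: bsteps_Bang bsteps_BAbs bsteps_AppL bsteps_AppR bsteps_Der)

theorem mainTheorem10:
  "equivclp beta_v M N \<longleftrightarrow> equivclp bstep (cbv M) (cbv N)"
proof
  assume "equivclp beta_v M N"
  then show "equivclp bstep (cbv M) (cbv N)"
  proof (induct rule: equivclp_induct)
    case base
    show ?case by simp
  next
    case (step y z)
    from step(2) have "equivclp bstep (cbv y) (cbv z)"
    proof
      assume "beta_v y z"
      then show ?thesis by (intro rtranclp_into_equivclp beta_cbv)
    next
      assume "beta_v z y"
      then show ?thesis by (intro converse_rtranclp_into_equivclp beta_cbv)
    qed
    then show ?case using step(3) by (rule equivclp_trans[rotated])
  qed
next
  assume "equivclp bstep (cbv M) (cbv N)"
  then obtain c where c: "bstep\<^sup>*\<^sup>* (cbv M) c" "bstep\<^sup>*\<^sup>* (cbv N) c"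
    using bstep_CR by blast
  have "beta_v\<^sup>*\<^sup>* M (dec c)" using dec_steps[OF c(1) good_cbv] by simp
  moreover have "beta_v\<^sup>*\<^sup>* N (dec c)" using dec_steps[OF c(2) good_cbv] by simp
  ultimately show "equivclp beta_v M N"
    by (meson equivclp_trans rtranclp_into_equivclp converse_rtranclp_into_equivclp)
qed

end
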